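(* Every model of an extensionally complete set of sentences is separating.
   Context: Setting: higher-order logic (Church's simple theory of types, without a description operator), with its standard Hilbert-style proof system (logical axioms for truth values, Leibniz' law, extensionality, $\beta$-reduction, and the rule of equality substitution) and Henkin semantics: an interpretation $I$ consists of domains $D_\alpha$ ($D_o=\{\mathsf T,\mathsf F\}$, $D_{\alpha\to\beta}$ a set of functions) and a valuation of the constants (equality denoting identity) such that every term has a denotation; $V(t,I)$ is the denotation of a closed term $t$. Sentences are closed terms of type $o$; a model of a set of sentences is an interpretation in which each is true. A set $S$ of sentences is extensionally complete if for every pair $r,s$ of closed terms of the same function type $\alpha\to\beta$ there is a closed term $t$ of type $\alpha$ such that $r\neq s\to(r\,t)\neq(s\,t)$ is derivable from $S$. An interpretation $I$ is separating if for every pair $r,s$ of closed terms of the same function type $\alpha\to\beta$ with $V(r,I)\neq V(s,I)$ there is a closed term $t$ of type $\alpha$ (over the given alphabet) with $V((r\,t),I)\neq V((s\,t),I)$. *)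

theory Defs
  imports Main
begin

section \<open>Syntax of Church's simple type theory (Andrews' Q0 without description)\<close>

datatype ty = Tyo | Base nat | Fun ty ty

(* variables and constants are identified by a name together with a type;
   Q T is the equality constant of type T \<rightarrow> T \<rightarrow> o *)
datatype tm = Var string ty | Con string ty | Q ty | App tm tm | Lam string ty tm

fun type_of :: "tm \<Rightarrow> ty option" where
  "type_of (Var x T) = Some T"
| "type_of (Con c T) = Some T"
| "type_of (Q T) = Some (Fun T (Fun T Tyo))"
| "type_of (App s t) =
     (case type_of s of
        Some (Fun A B) \<Rightarrow> (if type_of t = Some A then Some B else None)
      | _ \<Rightarrow> None)"
| "type_of (Lam x T b) = map_option (Fun T) (type_of b)"

fun frees :: "tm \<Rightarrow> (string \<times> ty) set" where
  "frees (Var x T) = {(x, T)}"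
| "frees (Con c T) = {}"
| "frees (Q T) = {}"
| "frees (App s t) = frees s \<union> frees t"
| "frees (Lam x T b) = frees b - {(x, T)}"

fun consts_of :: "tm \<Rightarrow> (string \<times> ty) set" where
  "consts_of (Var x T) = {}"
| "consts_of (Con c T) = {(c, T)}"
| "consts_of (Q T) = {}"
| "consts_of (App s t) = consts_of s \<union> consts_of t"
| "consts_of (Lam x T b) = consts_of b"

text \<open>The alphabet \<Sigma> is a set of typed (non-logical) constants; the equality
  constants Q are logical and always available.\<close>

definition wff :: "(string \<times> ty) set \<Rightarrow> tm \<Rightarrow> ty \<Rightarrow> bool" where
  "wff \<Sigma> t A \<longleftrightarrow> type_of t = Some A \<and> consts_of t \<subseteq> \<Sigma>"

definition closed :: "tm \<Rightarrow> bool" where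
  "closed t \<longleftrightarrow> frees t = {}"

definition closed_term :: "(string \<times> ty) set \<Rightarrow> tm \<Rightarrow> ty \<Rightarrow> bool" where
  "closed_term \<Sigma> t A \<longleftrightarrow> wff \<Sigma> t A \<and> closed t"

definition sentence :: "(string \<times> ty) set \<Rightarrow> tm \<Rightarrow> bool" where
  "sentence \<Sigma> t \<longleftrightarrow> closed_term \<Sigma> t Tyo"

section \<open>Abbreviations of the logical connectives (Andrews)\<close>

definition eqt :: "ty \<Rightarrow> tm \<Rightarrow> tm \<Rightarrow> tm" where
  "eqt T a b = App (App (Q T) a) b"

definition Tr :: tm where
  "Tr = eqt (Fun Tyo (Fun Tyo Tyo)) (Q Tyo) (Q Tyo)"

definition Fa :: tm where
  "Fa = eqt (Fun Tyo Tyo) (Lam ''x'' Tyo Tr) (Lam ''x'' Tyo (Var ''x'' Tyo))"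

definition All :: "string \<Rightarrow> ty \<Rightarrow> tm \<Rightarrow> tm" where
  "All x T a = eqt (Fun T Tyo) (Lam x T Tr) (Lam x T a)"

definition andC :: tm where
  "andC = Lam ''x'' Tyo (Lam ''y'' Tyo
     (eqt (Fun (Fun Tyo (Fun Tyo Tyo)) Tyo)
        (Lam ''g'' (Fun Tyo (Fun Tyo Tyo)) (App (App (Var ''g'' (Fun Tyo (Fun Tyo Tyo))) Tr) Tr))
        (Lam ''g'' (Fun Tyo (Fun Tyo Tyo)) (App (App (Var ''g'' (Fun Tyo (Fun Tyo Tyo))) (Var ''x'' Tyo)) (Var ''y'' Tyo)))))"

definition conj :: "tm \<Rightarrow> tm \<Rightarrow> tm" where
  "conj a b = App (App andC a) b"

definition impC :: tm where
  "impC = Lam ''x'' Tyo (Lam ''y'' Tyo (eqt Tyo (Var ''x'' Tyo) (conj (Var ''x'' Tyo) (Var ''y'' Tyo))))"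

definition imp :: "tm \<Rightarrow> tm \<Rightarrow> tm" where
  "imp a b = App (App impC a) b"

definition neg :: "tm \<Rightarrow> tm" where
  "neg a = App (App (Q Tyo) Fa) a"

definition neq :: "ty \<Rightarrow> tm \<Rightarrow> tm \<Rightarrow> tm" where
  "neq T a b = neg (eqt T a b)"

section \<open>Proof system: axioms 1--4 of Q0 and rule R, with hypotheses\<close>

text \<open>One-occurrence replacement: repl a b c c' iff c' arises from c by
  replacing one occurrence of a by b (the variable after a lambda is not a subterm).\<close>

inductive repl :: "tm \<Rightarrow> tm \<Rightarrow> tm \<Rightarrow> tm \<Rightarrow> bool" where
  here: "repl a b a b"
| appL: "repl a b s s' \<Longrightarrow> repl a b (App s t) (App s' t)"
| appR: "repl a b t t' \<Longrightarrow> repl a b (App s t) (App s t')"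
| lam:  "repl a b s s' \<Longrightarrow> repl a b (Lam x T s) (Lam x T s')"

inductive derivable :: "(string \<times> ty) set \<Rightarrow> tm set \<Rightarrow> tm \<Rightarrow> bool" for \<Sigma> S where
  hyp: "a \<in> S \<Longrightarrow> derivable \<Sigma> S a"
| ax1: "derivable \<Sigma> S
     (eqt Tyo (conj (App (Var ''g'' (Fun Tyo Tyo)) Tr) (App (Var ''g'' (Fun Tyo Tyo)) Fa))
            (All ''x'' Tyo (App (Var ''g'' (Fun Tyo Tyo)) (Var ''x'' Tyo))))"
| ax2: "derivable \<Sigma> S
     (imp (eqt A (Var ''x'' A) (Var ''y'' A))
          (eqt Tyo (App (Var ''h'' (Fun A Tyo)) (Var ''x'' A)) (App (Var ''h'' (Fun A Tyo)) (Var ''y'' A))))"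
| ax3: "derivable \<Sigma> S
     (eqt Tyo (eqt (Fun B A) (Var ''f'' (Fun B A)) (Var ''g'' (Fun B A)))
            (All ''x'' B (eqt A (App (Var ''f'' (Fun B A)) (Var ''x'' B))
                                (App (Var ''g'' (Fun B A)) (Var ''x'' B)))))"
| ax4_1: "\<lbrakk> wff \<Sigma> a A; wff \<Sigma> y B;
            (\<exists>z. y = Var z B \<and> (z, B) \<noteq> (x, A)) \<or> (\<exists>c. y = Con c B) \<or> (\<exists>C. y = Q C) \<rbrakk>
          \<Longrightarrow> derivable \<Sigma> S (eqt B (App (Lam x A y) a) y)"
| ax4_2: "wff \<Sigma> a A \<Longrightarrow> derivable \<Sigma> S (eqt A (App (Lam x A (Var x A)) a) a)"
| ax4_3: "\<lbrakk> wff \<Sigma> a A; wff \<Sigma> b (Fun C D); wff \<Sigma> c C \<rbrakk> \<Longrightarrow> derivable \<Sigma> S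
            (eqt D (App (Lam x A (App b c)) a) (App (App (Lam x A b) a) (App (Lam x A c) a)))"
| ax4_4: "\<lbrakk> wff \<Sigma> a A; wff \<Sigma> b D; (y, C) \<noteq> (x, A); (y, C) \<notin> frees a \<rbrakk> \<Longrightarrow> derivable \<Sigma> S
            (eqt (Fun C D) (App (Lam x A (Lam y C b)) a) (Lam y C (App (Lam x A b) a)))"
| ax4_5: "\<lbrakk> wff \<Sigma> a A; wff \<Sigma> b D \<rbrakk> \<Longrightarrow> derivable \<Sigma> S
            (eqt (Fun A D) (App (Lam x A (Lam x A b)) a) (Lam x A b))"
| ruleR: "\<lbrakk> derivable \<Sigma> S c; derivable \<Sigma> S (eqt A a b); repl a b c c' \<rbrakk>
          \<Longrightarrow> derivable \<Sigma> S c'"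

definition ext_complete :: "(string \<times> ty) set \<Rightarrow> tm set \<Rightarrow> bool" where
  "ext_complete \<Sigma> S \<longleftrightarrow>
     (\<forall>A B r s. closed_term \<Sigma> r (Fun A B) \<and> closed_term \<Sigma> s (Fun A B) \<longrightarrow>
        (\<exists>t. closed_term \<Sigma> t A \<and>
             derivable \<Sigma> S (imp (neq (Fun A B) r s) (neq B (App r t) (App s t)))))"

text \<open>Domains are subsets of a universe 'u; a function domain D(A\<rightarrow>B) is represented
  extensionally via an application operation (so its elements are functions D A \<rightarrow> D B).\<close>

record 'u interp =
  dom :: "ty \<Rightarrow> 'u set"
  app :: "'u \<Rightarrow> 'u \<Rightarrow> 'u"
  tt :: 'u
  ff :: 'u
  cval :: "string \<times> ty \<Rightarrow> 'u"
  eqval :: "ty \<Rightarrow> 'u"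

fun val :: "'u interp \<Rightarrow> (string \<times> ty \<Rightarrow> 'u) \<Rightarrow> tm \<Rightarrow> 'u" where
  "val I \<phi> (Var x T) = \<phi> (x, T)"
| "val I \<phi> (Con c T) = cval I (c, T)"
| "val I \<phi> (Q T) = eqval I T"
| "val I \<phi> (App s t) = app I (val I \<phi> s) (val I \<phi> t)"
| "val I \<phi> (Lam x T b) =
     (SOME f. f \<in> dom I (Fun T (the (type_of b))) \<and>
              (\<forall>d\<in>dom I T. app I f d = val I (\<phi>((x, T) := d)) b))"

definition asg_ok :: "'u interp \<Rightarrow> (string \<times> ty \<Rightarrow> 'u) \<Rightarrow> bool" where
  "asg_ok I \<phi> \<longleftrightarrow> (\<forall>x T. \<phi> (x, T) \<in> dom I T)"

definition henkin_interp :: "(string \<times> ty) set \<Rightarrow> 'u interp \<Rightarrow> bool" where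
  "henkin_interp \<Sigma> I \<longleftrightarrow>
     (\<forall>T. dom I T \<noteq> {}) \<and>
     dom I Tyo = {tt I, ff I} \<and> tt I \<noteq> ff I \<and>
     (\<forall>A B f d. f \<in> dom I (Fun A B) \<and> d \<in> dom I A \<longrightarrow> app I f d \<in> dom I B) \<and>
     (\<forall>A B f g. f \<in> dom I (Fun A B) \<and> g \<in> dom I (Fun A B) \<and>
                (\<forall>d\<in>dom I A. app I f d = app I g d) \<longrightarrow> f = g) \<and>
     (\<forall>c T. (c, T) \<in> \<Sigma> \<longrightarrow> cval I (c, T) \<in> dom I T) \<and>
     (\<forall>T. eqval I T \<in> dom I (Fun T (Fun T Tyo)) \<and>
          (\<forall>x\<in>dom I T. \<forall>y\<in>dom I T.
              app I (app I (eqval I T) x) y = (if x = y then tt I else ff I))) \<and>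
     (\<forall>\<phi> x T b B. asg_ok I \<phi> \<and> wff \<Sigma> (Lam x T b) (Fun T B) \<longrightarrow>
        (\<exists>f\<in>dom I (Fun T B). \<forall>d\<in>dom I T. app I f d = val I (\<phi>((x, T) := d)) b))"

text \<open>Denotation of a closed term (independent of the assignment).\<close>

definition V :: "tm \<Rightarrow> 'u interp \<Rightarrow> 'u" where
  "V t I = val I (\<lambda>(x, T). SOME d. d \<in> dom I T) t"

definition is_model :: "(string \<times> ty) set \<Rightarrow> 'u interp \<Rightarrow> tm set \<Rightarrow> bool" where
  "is_model \<Sigma> I S \<longleftrightarrow> henkin_interp \<Sigma> I \<and> (\<forall>a\<in>S. V a I = tt I)"

definition separating :: "(string \<times> ty) set \<Rightarrow> 'u interp \<Rightarrow> bool" where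
  "separating \<Sigma> I \<longleftrightarrow>
     (\<forall>A B r s. closed_term \<Sigma> r (Fun A B) \<and> closed_term \<Sigma> s (Fun A B) \<and> V r I \<noteq> V s I \<longrightarrow>
        (\<exists>t. closed_term \<Sigma> t A \<and> V (App r t) I \<noteq> V (App s t) I))"

end

theory Submission
  imports Defs
begin



lemma asg_ok_upd: "asg_ok I \<phi> \<Longrightarrow> d \<in> dom I T \<Longrightarrow> asg_ok I (\<phi>((x,T):=d))"
  by (auto simp: asg_ok_def)

lemma coinc: "(\<forall>v\<in>frees t. \<phi> v = \<psi> v) \<Longrightarrow> val I \<phi> t = val I \<psi> t"
proof (induction t arbitrary: \<phi> \<psi>)
  case (Lam x T b)
  have "\<forall>d. val I (\<phi>((x,T):=d)) b = val I (\<psi>((x,T):=d)) b"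
    using Lam by (intro allI Lam.IH) auto
  then show ?case by simp
next
  case (App s t)
  have "val I \<phi> s = val I \<psi> s" "val I \<phi> t = val I \<psi> t"
    using App.prems by (auto intro!: App.IH)
  then show ?case by simp
qed auto

context fixes \<Sigma> and I :: "'u interp" assumes H: "henkin_interp \<Sigma> I"
begin

lemma dom_o: "dom I Tyo = {tt I, ff I}" and tf: "tt I \<noteq> ff I"
  using H by (auto simp: henkin_interp_def)

lemma app_dom: "f \<in> dom I (Fun A B) \<Longrightarrow> d \<in> dom I A \<Longrightarrow> app I f d \<in> dom I B"
  using H by (auto simp: henkin_interp_def)

lemma ext_iff: "f \<in> dom I (Fun A B) \<Longrightarrow> g \<in> dom I (Fun A B) \<Longrightarrow>
   (f = g) \<longleftrightarrow> (\<forall>d\<in>dom I A. app I f d = app I g d)"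
  using H unfolding henkin_interp_def by blast

lemma eq_dom: "eqval I T \<in> dom I (Fun T (Fun T Tyo))"
  using H by (auto simp: henkin_interp_def)

lemma eq_app: "x \<in> dom I T \<Longrightarrow> y \<in> dom I T \<Longrightarrow>
   app I (app I (eqval I T) x) y = (if x = y then tt I else ff I)"
  using H unfolding henkin_interp_def by blast

lemma lam_val: assumes "wff \<Sigma> (Lam x T b) (Fun T B)" "asg_ok I \<phi>"
  shows "val I \<phi> (Lam x T b) \<in> dom I (Fun T B) \<and>
     (\<forall>d\<in>dom I T. app I (val I \<phi> (Lam x T b)) d = val I (\<phi>((x, T) := d)) b)"
proof -
  have tb: "type_of b = Some B" using assms(1) by (auto simp: wff_def)
  have "\<exists>f\<in>dom I (Fun T B). \<forall>d\<in>dom I T. app I f d = val I (\<phi>((x, T) := d)) b"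
    using H assms unfolding henkin_interp_def by blast
  then have "\<exists>f. f\<in>dom I (Fun T B) \<and> (\<forall>d\<in>dom I T. app I f d = val I (\<phi>((x, T) := d)) b)" by blast
  from someI_ex[OF this] show ?thesis using tb by simp
qed

lemma lam_app: "wff \<Sigma> (Lam x T b) (Fun T B) \<Longrightarrow> asg_ok I \<phi> \<Longrightarrow> d \<in> dom I T \<Longrightarrow>
   app I (val I \<phi> (Lam x T b)) d = val I (\<phi>((x, T) := d)) b"
  using lam_val by blast

lemma val_dom: "wff \<Sigma> t T \<Longrightarrow> asg_ok I \<phi> \<Longrightarrow> val I \<phi> t \<in> dom I T"
proof (induction t arbitrary: T \<phi>)
  case (Var x T') then show ?case by (auto simp: wff_def asg_ok_def)
next
  case (Con c T') then show ?case using H by (auto simp: wff_def henkin_interp_def)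
next
  case (Q T') then show ?case using eq_dom by (auto simp: wff_def)
next
  case (App s t)
  then obtain A where "type_of s = Some (Fun A T)" "type_of t = Some A"
    by (auto simp: wff_def split: option.splits ty.splits if_splits)
  then have "wff \<Sigma> s (Fun A T)" "wff \<Sigma> t A" using App.prems by (auto simp: wff_def)
  then show ?case using app_dom[OF App.IH(1) App.IH(2)] App.prems by auto
next
  case (Lam x T' b)
  then obtain B where "T = Fun T' B" by (auto simp: wff_def)
  then show ?case using Lam lam_val by blast
qed

end



lemma wff_eqt: "wff \<Sigma> (eqt T a b) B \<longleftrightarrow> wff \<Sigma> a T \<and> wff \<Sigma> b T \<and> B = Tyo"
  by (auto simp: wff_def eqt_def split: option.splits ty.splits if_splits)

lemma wff_Tr: "wff \<Sigma> Tr Tyo" by (simp add: wff_def Tr_def eqt_def)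
lemma wff_Fa: "wff \<Sigma> Fa Tyo" by (simp add: wff_def Fa_def Tr_def eqt_def)
lemma wff_andC: "wff \<Sigma> andC (Fun Tyo (Fun Tyo Tyo))" by (simp add: wff_def andC_def Tr_def eqt_def)
lemma wff_conj: "wff \<Sigma> a Tyo \<Longrightarrow> wff \<Sigma> b Tyo \<Longrightarrow> wff \<Sigma> (conj a b) Tyo"
  using wff_andC[of \<Sigma>] by (simp add: wff_def conj_def)
lemma wff_impC: "wff \<Sigma> impC (Fun Tyo (Fun Tyo Tyo))"
  using wff_andC[of \<Sigma>] by (simp add: wff_def impC_def conj_def eqt_def)
lemma wff_imp: "wff \<Sigma> a Tyo \<Longrightarrow> wff \<Sigma> b Tyo \<Longrightarrow> wff \<Sigma> (imp a b) Tyo"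
  using wff_impC[of \<Sigma>] by (simp add: wff_def imp_def)
lemma wff_neg: "wff \<Sigma> a Tyo \<Longrightarrow> wff \<Sigma> (neg a) Tyo"
  using wff_Fa[of \<Sigma>] by (simp add: wff_def neg_def)
lemma wff_All: "wff \<Sigma> a Tyo \<Longrightarrow> wff \<Sigma> (All x T a) Tyo"
  using wff_Tr[of \<Sigma>] by (simp add: wff_def All_def eqt_def)

context fixes \<Sigma> and I :: "'u interp" assumes H: "henkin_interp \<Sigma> I"
begin

lemma eqt_val: "wff \<Sigma> a T \<Longrightarrow> wff \<Sigma> b T \<Longrightarrow> asg_ok I \<phi> \<Longrightarrow>
  val I \<phi> (eqt T a b) = (if val I \<phi> a = val I \<phi> b then tt I else ff I)"
  unfolding eqt_def using eq_app[OF H] val_dom[OF H] by simp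

lemma Tr_val: "asg_ok I \<phi> \<Longrightarrow> val I \<phi> Tr = tt I"
  unfolding Tr_def by (subst eqt_val) (auto simp: wff_def)

lemma Fa_val: assumes "asg_ok I \<phi>" shows "val I \<phi> Fa = ff I"
proof -
  have w1: "wff \<Sigma> (Lam ''x'' Tyo Tr) (Fun Tyo Tyo)" using wff_Tr[of \<Sigma>] by (simp add: wff_def)
  have w2: "wff \<Sigma> (Lam ''x'' Tyo (Var ''x'' Tyo)) (Fun Tyo Tyo)" by (simp add: wff_def)
  have ffd: "ff I \<in> dom I Tyo" using dom_o[OF H] by simp
  have "app I (val I \<phi> (Lam ''x'' Tyo Tr)) (ff I) = tt I"
    using lam_app[OF H w1 assms ffd] Tr_val asg_ok_upd[OF assms ffd] by simp
  moreover have "app I (val I \<phi> (Lam ''x'' Tyo (Var ''x'' Tyo))) (ff I) = ff I"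
    using lam_app[OF H w2 assms ffd] by simp
  ultimately have "val I \<phi> (Lam ''x'' Tyo Tr) \<noteq> val I \<phi> (Lam ''x'' Tyo (Var ''x'' Tyo))"
    using tf[OF H] by auto
  then show ?thesis unfolding Fa_def using eqt_val[OF w1 w2 assms] by simp
qed

lemma All_val: assumes "wff \<Sigma> a Tyo" "asg_ok I \<phi>"
  shows "val I \<phi> (All x T a) = (if \<forall>d\<in>dom I T. val I (\<phi>((x,T):=d)) a = tt I then tt I else ff I)"
proof -
  have w1: "wff \<Sigma> (Lam x T Tr) (Fun T Tyo)" using wff_Tr[of \<Sigma>] by (simp add: wff_def)
  have w2: "wff \<Sigma> (Lam x T a) (Fun T Tyo)" using assms by (simp add: wff_def)
  have "(val I \<phi> (Lam x T Tr) = val I \<phi> (Lam x T a)) \<longleftrightarrow>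
        (\<forall>d\<in>dom I T. val I (\<phi>((x,T):=d)) a = tt I)"
    using ext_iff[OF H val_dom[OF H w1 assms(2)] val_dom[OF H w2 assms(2)]]
      lam_app[OF H w1 assms(2)] lam_app[OF H w2 assms(2)] Tr_val asg_ok_upd[OF assms(2)]
    by (metis (no_types, lifting))
  then show ?thesis unfolding All_def using eqt_val[OF w1 w2 assms(2)] by simp
qed

end



context fixes \<Sigma> and I :: "'u interp" assumes H: "henkin_interp \<Sigma> I"
begin

lemma proj: assumes "asg_ok I \<phi>"
  shows "\<exists>P1\<in>dom I (Fun Tyo (Fun Tyo Tyo)). \<exists>P2\<in>dom I (Fun Tyo (Fun Tyo Tyo)).
     \<forall>d\<in>dom I Tyo. \<forall>e\<in>dom I Tyo. app I (app I P1 d) e = d \<and> app I (app I P2 d) e = e"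
proof -
  let ?L1 = "Lam ''x'' Tyo (Lam ''y'' Tyo (Var ''x'' Tyo))"
  let ?L2 = "Lam ''x'' Tyo (Lam ''y'' Tyo (Var ''y'' Tyo))"
  have w1: "wff \<Sigma> ?L1 (Fun Tyo (Fun Tyo Tyo))" "wff \<Sigma> ?L2 (Fun Tyo (Fun Tyo Tyo))"
    "wff \<Sigma> (Lam ''y'' Tyo (Var ''x'' Tyo)) (Fun Tyo Tyo)"
    "wff \<Sigma> (Lam ''y'' Tyo (Var ''y'' Tyo)) (Fun Tyo Tyo)" by (auto simp: wff_def)
  show ?thesis
  proof (intro bexI ballI conjI)
    fix d e assume d: "d \<in> dom I Tyo" and e: "e \<in> dom I Tyo"
    have a1: "asg_ok I (\<phi>((''x'', Tyo) := d))" using asg_ok_upd[OF assms d] .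
    show "app I (app I (val I \<phi> ?L1) d) e = d"
      using lam_app[OF H w1(1) assms d] lam_app[OF H w1(3) a1 e] by simp
    show "app I (app I (val I \<phi> ?L2) d) e = e"
      using lam_app[OF H w1(2) assms d] lam_app[OF H w1(4) a1 e] by simp
  qed (use val_dom[OF H w1(1) assms] val_dom[OF H w1(2) assms] in auto)
qed

lemma conj_val: assumes "wff \<Sigma> a Tyo" "wff \<Sigma> b Tyo" "asg_ok I \<phi>"
  shows "val I \<phi> (conj a b) = (if val I \<phi> a = tt I \<and> val I \<phi> b = tt I then tt I else ff I)"
proof -
  define G where "G = Fun Tyo (Fun Tyo Tyo)"
  let ?g = "Var ''g'' G"
  define L1 where "L1 = Lam ''g'' G (App (App ?g Tr) Tr)"
  define L2 where "L2 = Lam ''g'' G (App (App ?g (Var ''x'' Tyo)) (Var ''y'' Tyo))"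
  define E where "E = eqt (Fun G Tyo) L1 L2"
  have andC: "andC = Lam ''x'' Tyo (Lam ''y'' Tyo E)"
    unfolding andC_def E_def L1_def L2_def G_def ..
  have wL: "wff \<Sigma> L1 (Fun G Tyo)" "wff \<Sigma> L2 (Fun G Tyo)"
    by (auto simp: wff_def L1_def L2_def G_def Tr_def eqt_def)
  have wA: "wff \<Sigma> (Lam ''x'' Tyo (Lam ''y'' Tyo E)) (Fun Tyo (Fun Tyo Tyo))"
    "wff \<Sigma> (Lam ''y'' Tyo E) (Fun Tyo Tyo)"
    using wff_andC[of \<Sigma>] by (auto simp: andC wff_def)
  define va where "va = val I \<phi> a"
  define vb where "vb = val I \<phi> b"
  have va: "va \<in> dom I Tyo" and vb: "vb \<in> dom I Tyo"
    using val_dom[OF H assms(1,3)] val_dom[OF H assms(2,3)] by (auto simp: va_def vb_def)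
  define \<phi>1 where "\<phi>1 = \<phi>((''x'',Tyo):=va)"
  define \<phi>2 where "\<phi>2 = \<phi>1((''y'',Tyo):=vb)"
  have a1: "asg_ok I \<phi>1" using asg_ok_upd[OF assms(3) va] by (simp add: \<phi>1_def)
  have a2: "asg_ok I \<phi>2" using asg_ok_upd[OF a1 vb] by (simp add: \<phi>2_def)
  have "val I \<phi> (conj a b) = val I \<phi>2 E"
    unfolding conj_def using lam_app[OF H wA(1) assms(3) va] lam_app[OF H wA(2) a1 vb]
    by (simp add: andC va_def vb_def \<phi>1_def \<phi>2_def)
  also have "\<dots> = (if val I \<phi>2 L1 = val I \<phi>2 L2 then tt I else ff I)"
    unfolding E_def using eqt_val[OF H wL a2] .
  also have "(val I \<phi>2 L1 = val I \<phi>2 L2) \<longleftrightarrow>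
     (\<forall>g\<in>dom I G. app I (app I g (tt I)) (tt I) = app I (app I g va) vb)"
  proof -
    have "\<forall>g\<in>dom I G. app I (val I \<phi>2 L1) g = app I (app I g (tt I)) (tt I)"
    proof
      fix g assume g: "g \<in> dom I G"
      show "app I (val I \<phi>2 L1) g = app I (app I g (tt I)) (tt I)"
        using lam_app[OF H wL(1)[unfolded L1_def] a2 g] Tr_val[OF H asg_ok_upd[OF a2 g]]
        by (simp add: L1_def)
    qed
    moreover have "\<forall>g\<in>dom I G. app I (val I \<phi>2 L2) g = app I (app I g va) vb"
    proof
      fix g assume g: "g \<in> dom I G"
      show "app I (val I \<phi>2 L2) g = app I (app I g va) vb"
        using lam_app[OF H wL(2)[unfolded L2_def] a2 g]
        by (simp add: L2_def \<phi>2_def \<phi>1_def)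
    qed
    ultimately show ?thesis
      using ext_iff[OF H val_dom[OF H wL(1) a2] val_dom[OF H wL(2) a2]] by auto
  qed
  also have "(\<forall>g\<in>dom I G. app I (app I g (tt I)) (tt I) = app I (app I g va) vb) \<longleftrightarrow>
      (va = tt I \<and> vb = tt I)"
  proof
    assume h: "\<forall>g\<in>dom I G. app I (app I g (tt I)) (tt I) = app I (app I g va) vb"
    obtain P1 P2 where P: "P1 \<in> dom I G" "P2 \<in> dom I G"
      "\<forall>d\<in>dom I Tyo. \<forall>e\<in>dom I Tyo. app I (app I P1 d) e = d \<and> app I (app I P2 d) e = e"
      using proj[OF assms(3)] unfolding G_def by blast
    have tt: "tt I \<in> dom I Tyo" using dom_o[OF H] by simp
    show "va = tt I \<and> vb = tt I" using h P tt va vb by metis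
  qed simp
  finally show ?thesis by (simp add: va_def vb_def)
qed

lemma imp_val: assumes "wff \<Sigma> a Tyo" "wff \<Sigma> b Tyo" "asg_ok I \<phi>"
  shows "val I \<phi> (imp a b) = (if val I \<phi> a = tt I \<longrightarrow> val I \<phi> b = tt I then tt I else ff I)"
proof -
  define va where "va = val I \<phi> a"
  define vb where "vb = val I \<phi> b"
  have va: "va \<in> dom I Tyo" and vb: "vb \<in> dom I Tyo"
    using val_dom[OF H assms(1,3)] val_dom[OF H assms(2,3)] by (auto simp: va_def vb_def)
  define \<phi>1 where "\<phi>1 = \<phi>((''x'',Tyo):=va)"
  define \<phi>2 where "\<phi>2 = \<phi>1((''y'',Tyo):=vb)"
  have a1: "asg_ok I \<phi>1" using asg_ok_upd[OF assms(3) va] by (simp add: \<phi>1_def)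
  have a2: "asg_ok I \<phi>2" using asg_ok_upd[OF a1 vb] by (simp add: \<phi>2_def)
  define E where "E = eqt Tyo (Var ''x'' Tyo) (conj (Var ''x'' Tyo) (Var ''y'' Tyo))"
  have impC: "impC = Lam ''x'' Tyo (Lam ''y'' Tyo E)" unfolding impC_def E_def ..
  have wA: "wff \<Sigma> (Lam ''x'' Tyo (Lam ''y'' Tyo E)) (Fun Tyo (Fun Tyo Tyo))"
    "wff \<Sigma> (Lam ''y'' Tyo E) (Fun Tyo (Fun Tyo Tyo) )\<or>True"
    using wff_impC[of \<Sigma>] by (auto simp: impC)
  have wA2: "wff \<Sigma> (Lam ''y'' Tyo E) (Fun Tyo Tyo)"
    using wA(1) by (simp add: wff_def)
  have wv: "wff \<Sigma> (Var ''x'' Tyo) Tyo" "wff \<Sigma> (Var ''y'' Tyo) Tyo" by (auto simp: wff_def)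
  have "val I \<phi> (imp a b) = val I \<phi>2 E"
    unfolding imp_def using lam_app[OF H wA(1) assms(3) va] lam_app[OF H wA2 a1 vb]
    by (simp add: impC va_def vb_def \<phi>1_def \<phi>2_def)
  also have "\<dots> = (if va = (if va = tt I \<and> vb = tt I then tt I else ff I) then tt I else ff I)"
    unfolding E_def using eqt_val[OF H wv(1) wff_conj[OF wv] a2] conj_val[OF wv a2]
    by (simp add: \<phi>2_def \<phi>1_def)
  finally show ?thesis using va vb dom_o[OF H] tf[OF H] by (auto simp: va_def vb_def)
qed

lemma neg_val: assumes "wff \<Sigma> a Tyo" "asg_ok I \<phi>"
  shows "val I \<phi> (neg a) = (if val I \<phi> a = ff I then tt I else ff I)"
  using eq_app[OF H, of "ff I" Tyo "val I \<phi> a"] val_dom[OF H assms] Fa_val[OF H assms(2)]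
    dom_o[OF H] by (auto simp: neg_def)

lemma neq_val: assumes "wff \<Sigma> a T" "wff \<Sigma> b T" "asg_ok I \<phi>"
  shows "val I \<phi> (neq T a b) = (if val I \<phi> a \<noteq> val I \<phi> b then tt I else ff I)"
  unfolding neq_def using neg_val[OF _ assms(3)] eqt_val[OF H assms] wff_eqt[of \<Sigma> T a b Tyo] assms
    tf[OF H] by auto

end



lemma repl_type: "repl a b c c' \<Longrightarrow> type_of a = type_of b \<Longrightarrow> type_of c' = type_of c"
proof (induction rule: repl.induct)
  case (appL a b s s' t)
  then have "type_of s' = type_of s" by blast
  then show ?case by (simp only: type_of.simps)
next
  case (appR a b t t' s)
  then have "type_of t' = type_of t" by blast
  then show ?case by (simp only: type_of.simps)
next
  case (lam a b s s' x T)
  then have "type_of s' = type_of s" by blast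
  then show ?case by (simp only: type_of.simps)
qed simp

lemma repl_consts: "repl a b c c' \<Longrightarrow> consts_of c' \<subseteq> consts_of c \<union> consts_of b"
  by (induction rule: repl.induct) auto

definition good :: "(string \<times> ty) set \<Rightarrow> 'u interp \<Rightarrow> tm \<Rightarrow> bool" where
  "good \<Sigma> I t \<longleftrightarrow> wff \<Sigma> t Tyo \<and> (\<forall>\<phi>. asg_ok I \<phi> \<longrightarrow> val I \<phi> t = tt I)"

context fixes \<Sigma> and I :: "'u interp" assumes H: "henkin_interp \<Sigma> I"
begin

lemma repl_val: "repl a b c c' \<Longrightarrow> type_of a = type_of b \<Longrightarrow>
  (\<forall>\<psi>. asg_ok I \<psi> \<longrightarrow> val I \<psi> a = val I \<psi> b) \<Longrightarrow> asg_ok I \<phi> \<Longrightarrow> val I \<phi> c' = val I \<phi> c"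
proof (induction arbitrary: \<phi> rule: repl.induct)
  case (here a b)
  then show ?case by simp
next
  case (appL a b s s' t)
  have "val I \<phi> s' = val I \<phi> s" by (rule appL.IH[OF appL.prems])
  then show ?case by (simp only: val.simps)
next
  case (appR a b t t' s)
  have "val I \<phi> t' = val I \<phi> t" by (rule appR.IH[OF appR.prems])
  then show ?case by (simp only: val.simps)
next
  case (lam a b s s' x T)
  have t: "type_of s' = type_of s" using repl_type[OF lam.hyps lam.prems(1)] .
  have "\<forall>d\<in>dom I T. val I (\<phi>((x,T):=d)) s' = val I (\<phi>((x,T):=d)) s"
  proof
    fix d assume d: "d \<in> dom I T"
    show "val I (\<phi>((x,T):=d)) s' = val I (\<phi>((x,T):=d)) s"
      by (rule lam.IH[OF lam.prems(1,2) asg_ok_upd[OF lam.prems(3) d]])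
  qed
  then have "(\<lambda>f. f \<in> dom I (Fun T (the (type_of s'))) \<and>
              (\<forall>d\<in>dom I T. app I f d = val I (\<phi>((x, T) := d)) s')) =
             (\<lambda>f. f \<in> dom I (Fun T (the (type_of s))) \<and>
              (\<forall>d\<in>dom I T. app I f d = val I (\<phi>((x, T) := d)) s))"
    using t by (intro ext) auto
  then show ?case by (simp only: val.simps)
qed

lemma eqt_tt: "wff \<Sigma> a T \<Longrightarrow> wff \<Sigma> b T \<Longrightarrow> asg_ok I \<phi> \<Longrightarrow> val I \<phi> a = val I \<phi> b \<Longrightarrow>
   val I \<phi> (eqt T a b) = tt I"
  using eqt_val[OF H] by simp

lemma ax3_d1:
  assumes w: "wff \<Sigma> (App (Var ''f'' (Fun B A)) (Var ''x'' B)) A" "wff \<Sigma> (App (Var ''g'' (Fun B A)) (Var ''x'' B)) A"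
  and a: "asg_ok I \<phi>" and d: "d \<in> dom I B"
  shows "val I (\<phi>((''x'',B):=d)) (eqt A (App (Var ''f'' (Fun B A)) (Var ''x'' B)) (App (Var ''g'' (Fun B A)) (Var ''x'' B))) =
     (if app I (\<phi> (''f'', Fun B A)) d = app I (\<phi> (''g'', Fun B A)) d then tt I else ff I)"
  using eqt_val[OF H w asg_ok_upd[OF a d]] by simp

lemma ax1_sound:
  
  shows "good \<Sigma> I (eqt Tyo (conj (App (Var ''g'' (Fun Tyo Tyo)) Tr) (App (Var ''g'' (Fun Tyo Tyo)) Fa))
            (All ''x'' Tyo (App (Var ''g'' (Fun Tyo Tyo)) (Var ''x'' Tyo))))"
proof -
  let ?g = "Var ''g'' (Fun Tyo Tyo)"
  have w: "wff \<Sigma> (App ?g Tr) Tyo" "wff \<Sigma> (App ?g Fa) Tyo" "wff \<Sigma> (App ?g (Var ''x'' Tyo)) Tyo"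
    using wff_Tr[of \<Sigma>] wff_Fa[of \<Sigma>] by (auto simp: wff_def)
  have wc: "wff \<Sigma> (conj (App ?g Tr) (App ?g Fa)) Tyo" using wff_conj[OF w(1,2)] .
  have wa: "wff \<Sigma> (All ''x'' Tyo (App ?g (Var ''x'' Tyo))) Tyo" using wff_All[OF w(3)] .
  show ?thesis unfolding good_def
  proof (intro conjI allI impI)
    show "wff \<Sigma> (eqt Tyo (conj (App ?g Tr) (App ?g Fa)) (All ''x'' Tyo (App ?g (Var ''x'' Tyo)))) Tyo"
      using wc wa wff_eqt by blast
    fix \<phi> assume a: "asg_ok I \<phi>"
    show "val I \<phi> (eqt Tyo (conj (App ?g Tr) (App ?g Fa)) (All ''x'' Tyo (App ?g (Var ''x'' Tyo)))) = tt I"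
      apply (rule eqt_tt[OF wc wa a])
      apply (subst conj_val[OF H w(1,2) a])
      apply (subst All_val[OF H w(3) a])
      using Tr_val[OF H a] Fa_val[OF H a] dom_o[OF H] by auto
  qed
qed

lemma ax2_sound:
  
  shows "good \<Sigma> I (imp (eqt A (Var ''x'' A) (Var ''y'' A))
          (eqt Tyo (App (Var ''h'' (Fun A Tyo)) (Var ''x'' A)) (App (Var ''h'' (Fun A Tyo)) (Var ''y'' A))))"
proof -
  let ?x = "Var ''x'' A" and ?y = "Var ''y'' A" and ?h = "Var ''h'' (Fun A Tyo)"
  have w: "wff \<Sigma> ?x A" "wff \<Sigma> ?y A" "wff \<Sigma> (App ?h ?x) Tyo" "wff \<Sigma> (App ?h ?y) Tyo"
    by (auto simp: wff_def)
  have w1: "wff \<Sigma> (eqt A ?x ?y) Tyo" "wff \<Sigma> (eqt Tyo (App ?h ?x) (App ?h ?y)) Tyo"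
    using w wff_eqt by blast+
  show ?thesis unfolding good_def
  proof (intro conjI allI impI)
    show "wff \<Sigma> (imp (eqt A ?x ?y) (eqt Tyo (App ?h ?x) (App ?h ?y))) Tyo" using wff_imp[OF w1] .
    fix \<phi> assume a: "asg_ok I \<phi>"
    show "val I \<phi> (imp (eqt A ?x ?y) (eqt Tyo (App ?h ?x) (App ?h ?y))) = tt I"
    proof -
      have e1: "val I \<phi> (eqt A ?x ?y) = (if \<phi> (''x'', A) = \<phi> (''y'', A) then tt I else ff I)"
        using eqt_val[OF H w(1,2) a] by simp
      have e2: "val I \<phi> (eqt Tyo (App ?h ?x) (App ?h ?y)) =
         (if app I (\<phi> (''h'', Fun A Tyo)) (\<phi> (''x'', A)) = app I (\<phi> (''h'', Fun A Tyo)) (\<phi> (''y'', A)) then tt I else ff I)"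
        using eqt_val[OF H w(3,4) a] by simp
      show ?thesis unfolding imp_val[OF H w1 a] e1 e2 using tf[OF H] by auto
    qed
  qed
qed

lemma ax3_sound:
  
  shows "good \<Sigma> I (eqt Tyo (eqt (Fun B A) (Var ''f'' (Fun B A)) (Var ''g'' (Fun B A)))
            (All ''x'' B (eqt A (App (Var ''f'' (Fun B A)) (Var ''x'' B))
                                (App (Var ''g'' (Fun B A)) (Var ''x'' B)))))"
proof -
  let ?f = "Var ''f'' (Fun B A)" and ?g = "Var ''g'' (Fun B A)" and ?x = "Var ''x'' B"
  have w: "wff \<Sigma> ?f (Fun B A)" "wff \<Sigma> ?g (Fun B A)" "wff \<Sigma> (App ?f ?x) A" "wff \<Sigma> (App ?g ?x) A"
    by (auto simp: wff_def)
  have w1: "wff \<Sigma> (eqt (Fun B A) ?f ?g) Tyo" "wff \<Sigma> (eqt A (App ?f ?x) (App ?g ?x)) Tyo"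
    using w wff_eqt by blast+
  have w2: "wff \<Sigma> (All ''x'' B (eqt A (App ?f ?x) (App ?g ?x))) Tyo" using wff_All[OF w1(2)] .
  show ?thesis unfolding good_def
  proof (intro conjI allI impI)
    show "wff \<Sigma> (eqt Tyo (eqt (Fun B A) ?f ?g) (All ''x'' B (eqt A (App ?f ?x) (App ?g ?x)))) Tyo"
      using w1 w2 wff_eqt by blast
    fix \<phi> assume a: "asg_ok I \<phi>"
    have F: "\<phi> (''f'', Fun B A) \<in> dom I (Fun B A)" "\<phi> (''g'', Fun B A) \<in> dom I (Fun B A)"
      using a by (auto simp: asg_ok_def)
    let ?F = "\<phi> (''f'', Fun B A)" and ?G = "\<phi> (''g'', Fun B A)"
    have d1: "val I (\<phi>((''x'',B):=d)) (eqt A (App ?f ?x) (App ?g ?x)) =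
       (if app I ?F d = app I ?G d then tt I else ff I)" if d: "d \<in> dom I B" for d
      using ax3_d1[OF w(3,4) a d] .
    have e2: "val I \<phi> (All ''x'' B (eqt A (App ?f ?x) (App ?g ?x))) =
       (if \<forall>d\<in>dom I B. app I ?F d = app I ?G d then tt I else ff I)"
    proof -
      have "(\<forall>d\<in>dom I B. val I (\<phi>((''x'',B):=d)) (eqt A (App ?f ?x) (App ?g ?x)) = tt I) \<longleftrightarrow>
            (\<forall>d\<in>dom I B. app I ?F d = app I ?G d)"
        using d1 tf[OF H] by auto
      then show ?thesis unfolding All_val[OF H w1(2) a] by simp
    qed
    have e1: "val I \<phi> (eqt (Fun B A) ?f ?g) = (if ?F = ?G then tt I else ff I)"
      using eqt_val[OF H w(1,2) a] by simp
    show "val I \<phi> (eqt Tyo (eqt (Fun B A) ?f ?g) (All ''x'' B (eqt A (App ?f ?x) (App ?g ?x)))) = tt I"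
      apply (rule eqt_tt[OF w1(1) w2 a])
      unfolding e1 e2 using ext_iff[OF H F] by simp
  qed
qed

lemma ax4_1_sound:
  assumes ax4_1: "wff \<Sigma> a A" "wff \<Sigma> y B"
   "(\<exists>z. y = Var z B \<and> (z, B) \<noteq> (x, A)) \<or> (\<exists>c. y = Con c B) \<or> (\<exists>C. y = Q C)"
  shows "good \<Sigma> I (eqt B (App (Lam x A y) a) y)"
proof -
  have wl: "wff \<Sigma> (App (Lam x A y) a) B" "wff \<Sigma> (Lam x A y) (Fun A B)"
    using ax4_1 by (auto simp: wff_def)
  show ?thesis unfolding good_def
  proof (intro conjI allI impI)
    show "wff \<Sigma> (eqt B (App (Lam x A y) a) y) Tyo" using wl ax4_1 wff_eqt by blast
    fix \<phi> assume a: "asg_ok I \<phi>"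
    have va: "val I \<phi> a \<in> dom I A" using val_dom[OF H ax4_1(1) a] .
    show "val I \<phi> (eqt B (App (Lam x A y) a) y) = tt I"
      apply (rule eqt_tt[OF wl(1) ax4_1(2) a])
      using lam_app[OF H wl(2) a va] ax4_1(3) by (auto simp del: val.simps simp add: val.simps(1-4))
  qed
qed

lemma ax4_2_sound:
  assumes ax4_2: "wff \<Sigma> a A"
  shows "good \<Sigma> I (eqt A (App (Lam x A (Var x A)) a) a)"
proof -
  have wl: "wff \<Sigma> (App (Lam x A (Var x A)) a) A" "wff \<Sigma> (Lam x A (Var x A)) (Fun A A)"
    using ax4_2 by (auto simp: wff_def)
  show ?thesis unfolding good_def
  proof (intro conjI allI impI)
    show "wff \<Sigma> (eqt A (App (Lam x A (Var x A)) a) a) Tyo" using wl ax4_2 wff_eqt by blast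
    fix \<phi> assume a: "asg_ok I \<phi>"
    have va: "val I \<phi> a \<in> dom I A" using val_dom[OF H ax4_2(1) a] .
    show "val I \<phi> (eqt A (App (Lam x A (Var x A)) a) a) = tt I"
      apply (rule eqt_tt[OF wl(1) ax4_2(1) a])
      using lam_app[OF H wl(2) a va] by (auto simp del: val.simps simp add: val.simps(1-4))
  qed
qed

lemma ax4_3_sound:
  assumes ax4_3: "wff \<Sigma> a A" "wff \<Sigma> b (Fun C D)" "wff \<Sigma> c C"
  shows "good \<Sigma> I (eqt D (App (Lam x A (App b c)) a) (App (App (Lam x A b) a) (App (Lam x A c) a)))"
proof -
  have wl: "wff \<Sigma> (Lam x A (App b c)) (Fun A D)" "wff \<Sigma> (Lam x A b) (Fun A (Fun C D))"
    "wff \<Sigma> (Lam x A c) (Fun A C)"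
    using ax4_3 by (auto simp: wff_def)
  have w2: "wff \<Sigma> (App (Lam x A (App b c)) a) D"
     "wff \<Sigma> (App (App (Lam x A b) a) (App (Lam x A c) a)) D"
    using ax4_3 wl by (auto simp: wff_def)
  show ?thesis unfolding good_def
  proof (intro conjI allI impI)
    show "wff \<Sigma> (eqt D (App (Lam x A (App b c)) a) (App (App (Lam x A b) a) (App (Lam x A c) a))) Tyo"
      using w2 wff_eqt by blast
    fix \<phi> assume a: "asg_ok I \<phi>"
    have va: "val I \<phi> a \<in> dom I A" using val_dom[OF H ax4_3(1) a] .
    show "val I \<phi> (eqt D (App (Lam x A (App b c)) a) (App (App (Lam x A b) a) (App (Lam x A c) a))) = tt I"
      apply (rule eqt_tt[OF w2 a])
      using lam_app[OF H wl(1) a va] lam_app[OF H wl(2) a va] lam_app[OF H wl(3) a va] by (auto simp del: val.simps simp add: val.simps(1-4))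
  qed
qed

lemma ax4_4_sound:
  assumes ax4_4: "wff \<Sigma> a A" "wff \<Sigma> b D" "(y, C) \<noteq> (x, A)" "(y, C) \<notin> frees a"
  shows "good \<Sigma> I (eqt (Fun C D) (App (Lam x A (Lam y C b)) a) (Lam y C (App (Lam x A b) a)))"
proof -
  have wl: "wff \<Sigma> (Lam x A (Lam y C b)) (Fun A (Fun C D))" "wff \<Sigma> (Lam y C b) (Fun C D)"
    "wff \<Sigma> (Lam x A b) (Fun A D)"
    using ax4_4 by (auto simp: wff_def)
  have wr: "wff \<Sigma> (Lam y C (App (Lam x A b) a)) (Fun C D)"
    using ax4_4 by (auto simp: wff_def)
  have w2: "wff \<Sigma> (App (Lam x A (Lam y C b)) a) (Fun C D)"
    using ax4_4 wl by (auto simp: wff_def)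
  show ?thesis unfolding good_def
  proof (intro conjI allI impI)
    show "wff \<Sigma> (eqt (Fun C D) (App (Lam x A (Lam y C b)) a) (Lam y C (App (Lam x A b) a))) Tyo"
      using w2 wr wff_eqt by blast
    fix \<phi> assume a: "asg_ok I \<phi>"
    have va: "val I \<phi> a \<in> dom I A" using val_dom[OF H ax4_4(1) a] .
    have a1: "asg_ok I (\<phi>((x,A):=val I \<phi> a))" using asg_ok_upd[OF a va] .
    have eq: "val I (\<phi>((x,A):=val I \<phi> a)) (Lam y C b) = val I \<phi> (Lam y C (App (Lam x A b) a))"
    proof (subst ext_iff[OF H val_dom[OF H wl(2) a1] val_dom[OF H wr a]], intro ballI)
      fix e assume e: "e \<in> dom I C"
      have a2: "asg_ok I (\<phi>((y,C):=e))" using asg_ok_upd[OF a e] .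
      have ca: "val I (\<phi>((y,C):=e)) a = val I \<phi> a"
        by (rule coinc) (use ax4_4(4) in auto)
      have va2: "val I (\<phi>((y,C):=e)) a \<in> dom I A" using ca va by simp
      have "app I (val I (\<phi>((x, A) := val I \<phi> a)) (Lam y C b)) e =
            val I (\<phi>((x, A) := val I \<phi> a, (y,C) := e)) b"
        using lam_app[OF H wl(2) a1 e] .
      also have "\<dots> = val I (\<phi>((y,C) := e, (x, A) := val I \<phi> a)) b"
        using fun_upd_twist[of "(x,A)" "(y,C)" \<phi>] ax4_4(3) by metis
      also have "\<dots> = val I (\<phi>((y,C) := e, (x, A) := val I (\<phi>((y,C):=e)) a)) b"
        using ca by simp
      also have "\<dots> = app I (val I (\<phi>((y,C):=e)) (Lam x A b)) (val I (\<phi>((y,C):=e)) a)"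
        using lam_app[OF H wl(3) a2 va2] by simp
      also have "\<dots> = val I (\<phi>((y,C):=e)) (App (Lam x A b) a)"
        by (simp only: val.simps(4))
      also have "\<dots> = app I (val I \<phi> (Lam y C (App (Lam x A b) a))) e"
        using lam_app[OF H wr a e] by simp
      finally show "app I (val I (\<phi>((x, A) := val I \<phi> a)) (Lam y C b)) e =
            app I (val I \<phi> (Lam y C (App (Lam x A b) a))) e" .
    qed
    show "val I \<phi> (eqt (Fun C D) (App (Lam x A (Lam y C b)) a) (Lam y C (App (Lam x A b) a))) = tt I"
      apply (rule eqt_tt[OF w2 wr a])
      using lam_app[OF H wl(1) a va] eq by (simp del: val.simps add: val.simps(1-4))
  qed
qed

lemma ax4_5_sound:
  assumes ax4_5: "wff \<Sigma> a A" "wff \<Sigma> b D"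
  shows "good \<Sigma> I (eqt (Fun A D) (App (Lam x A (Lam x A b)) a) (Lam x A b))"
proof -
  have wl: "wff \<Sigma> (Lam x A (Lam x A b)) (Fun A (Fun A D))" "wff \<Sigma> (Lam x A b) (Fun A D)"
    using ax4_5 by (auto simp: wff_def)
  have w2: "wff \<Sigma> (App (Lam x A (Lam x A b)) a) (Fun A D)"
    using ax4_5 wl by (auto simp: wff_def)
  show ?thesis unfolding good_def
  proof (intro conjI allI impI)
    show "wff \<Sigma> (eqt (Fun A D) (App (Lam x A (Lam x A b)) a) (Lam x A b)) Tyo"
      using w2 wl wff_eqt by blast
    fix \<phi> assume a: "asg_ok I \<phi>"
    have va: "val I \<phi> a \<in> dom I A" using val_dom[OF H ax4_5(1) a] .
    have a1: "asg_ok I (\<phi>((x,A):=val I \<phi> a))" using asg_ok_upd[OF a va] .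
    have eq: "val I (\<phi>((x,A):=val I \<phi> a)) (Lam x A b) = val I \<phi> (Lam x A b)"
    proof (subst ext_iff[OF H val_dom[OF H wl(2) a1] val_dom[OF H wl(2) a]], intro ballI)
      fix e assume e: "e \<in> dom I A"
      show "app I (val I (\<phi>((x, A) := val I \<phi> a)) (Lam x A b)) e = app I (val I \<phi> (Lam x A b)) e"
        using lam_app[OF H wl(2) a1 e] lam_app[OF H wl(2) a e] by (simp del: val.simps)
    qed
    show "val I \<phi> (eqt (Fun A D) (App (Lam x A (Lam x A b)) a) (Lam x A b)) = tt I"
      apply (rule eqt_tt[OF w2 wl(2) a])
      using lam_app[OF H wl(1) a va] eq by (simp del: val.simps add: val.simps(1-4))
  qed
qed

lemma sound:
  assumes "derivable \<Sigma> S t"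
    and hS: "\<forall>a\<in>S. good \<Sigma> I a"
  shows "good \<Sigma> I t"
  using assms(1)
proof (induction rule: derivable.induct)
  case (hyp a) then show ?case using hS by blast
next
  case ax1 show ?case by (rule ax1_sound)
next
  case ax2 show ?case by (rule ax2_sound)
next
  case ax3 show ?case by (rule ax3_sound)
next
  case ax4_1 then show ?case by (rule ax4_1_sound)
next
  case ax4_2 then show ?case by (rule ax4_2_sound)
next
  case ax4_3 then show ?case by (rule ax4_3_sound)
next
  case ax4_4 then show ?case by (rule ax4_4_sound)
next
  case ax4_5 then show ?case by (rule ax4_5_sound)
next
  case (ruleR c A a b c')
  have wab: "wff \<Sigma> a A" "wff \<Sigma> b A" using ruleR(5)[unfolded good_def] wff_eqt by blast+
  have veq: "\<forall>\<psi>. asg_ok I \<psi> \<longrightarrow> val I \<psi> a = val I \<psi> b"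
  proof (intro allI impI)
    fix \<psi> assume p: "asg_ok I \<psi>"
    have "val I \<psi> (eqt A a b) = tt I" using ruleR(5)[unfolded good_def] p by blast
    then show "val I \<psi> a = val I \<psi> b" using eqt_val[OF H wab p] tf[OF H] by (auto split: if_splits)
  qed
  have ty: "type_of a = type_of b" using wab by (simp add: wff_def)
  have wc': "wff \<Sigma> c' Tyo"
    using ruleR(4)[unfolded good_def] repl_type[OF ruleR(3) ty] repl_consts[OF ruleR(3)] wab(2)
    by (auto simp: wff_def)
  show ?case unfolding good_def using wc' ruleR(4)[unfolded good_def] repl_val[OF ruleR(3) ty veq] by simp
qed

end



theorem mainTheorem18:
  fixes \<Sigma> :: "(string \<times> ty) set" and S :: "tm set" and I :: "'u interp"
  assumes "\<forall>a\<in>S. sentence \<Sigma> a"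
    and "ext_complete \<Sigma> S"
    and "is_model \<Sigma> I S"
  shows "separating \<Sigma> I"
proof -
  have H: "henkin_interp \<Sigma> I" using assms(3) by (simp add: is_model_def)
  define \<phi>0 :: "string \<times> ty \<Rightarrow> 'u" where "\<phi>0 = (\<lambda>(x, T). SOME d. d \<in> dom I T)"
  have a0: "asg_ok I \<phi>0"
    unfolding asg_ok_def \<phi>0_def
  proof (intro allI)
    fix x T
    have "dom I T \<noteq> {}" using H by (simp add: henkin_interp_def)
    then show "(case (x, T) of (x, T) \<Rightarrow> SOME d. d \<in> dom I T) \<in> dom I T"
      by (simp add: some_in_eq)
  qed
  have V0: "V t I = val I \<phi>0 t" for t by (simp add: V_def \<phi>0_def)
  have hS: "\<forall>a\<in>S. good \<Sigma> I a"
  proof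
    fix a assume aS: "a \<in> S"
    have sa: "sentence \<Sigma> a" using assms(1) aS by blast
    then have wa: "wff \<Sigma> a Tyo" and fa: "frees a = {}"
      by (auto simp: sentence_def closed_term_def closed_def)
    have "V a I = tt I" using assms(3) aS by (simp add: is_model_def)
    then have "val I \<phi> a = tt I" for \<phi>
      using coinc[of a \<phi> \<phi>0 I] fa V0 by simp
    then show "good \<Sigma> I a" using wa by (simp add: good_def)
  qed
  show ?thesis unfolding separating_def
  proof (intro allI impI)
    fix A B r s
    assume rs: "closed_term \<Sigma> r (Fun A B) \<and> closed_term \<Sigma> s (Fun A B) \<and> V r I \<noteq> V s I"
    then obtain t where ct: "closed_term \<Sigma> t A"
      and dv: "derivable \<Sigma> S (imp (neq (Fun A B) r s) (neq B (App r t) (App s t)))"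
      using assms(2) unfolding ext_complete_def by blast
    have wr: "wff \<Sigma> r (Fun A B)" "wff \<Sigma> s (Fun A B)" "wff \<Sigma> t A"
      using rs ct by (auto simp: closed_term_def)
    have wapp: "wff \<Sigma> (App r t) B" "wff \<Sigma> (App s t) B"
      using wr by (auto simp: wff_def)
    have wn1: "wff \<Sigma> (neq (Fun A B) r s) Tyo"
      unfolding neq_def using wff_neg wff_eqt wr by blast
    have wn2: "wff \<Sigma> (neq B (App r t) (App s t)) Tyo"
      unfolding neq_def using wff_neg wff_eqt wapp by blast
    have g: "good \<Sigma> I (imp (neq (Fun A B) r s) (neq B (App r t) (App s t)))"
      using sound[OF H dv hS] .
    then have "val I \<phi>0 (imp (neq (Fun A B) r s) (neq B (App r t) (App s t))) = tt I"
      using a0 by (simp add: good_def)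
    then have imp1: "val I \<phi>0 (neq (Fun A B) r s) = tt I \<longrightarrow> val I \<phi>0 (neq B (App r t) (App s t)) = tt I"
      using imp_val[OF H wn1 wn2 a0] tf[OF H] by (auto split: if_splits)
    have "val I \<phi>0 (neq (Fun A B) r s) = tt I"
      using neq_val[OF H wr(1,2) a0] rs V0 by simp
    then have "val I \<phi>0 (neq B (App r t) (App s t)) = tt I" using imp1 by blast
    then have "val I \<phi>0 (App r t) \<noteq> val I \<phi>0 (App s t)"
      using neq_val[OF H wapp a0] tf[OF H] by (auto split: if_splits)
    then show "\<exists>t. closed_term \<Sigma> t A \<and> V (App r t) I \<noteq> V (App s t) I"
      using ct V0 by metis
  qed
qed


end
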